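(* Let $T$ be a $\delta$-Jordan Lie supertriple system, $\psi:T\times T\times T\to T$ an even trilinear map, and for a formal variable $\lambda$ let $T_\lambda$ denote $T$ with the product $[x_1,x_2,x_3]_\lambda=[x_1,x_2,x_3]+\lambda\psi(x_1,x_2,x_3)$. Then $T_\lambda$ is a $\delta$-Jordan Lie supertriple system if and only if (i) $\psi$ itself defines a $\delta$-Jordan Lie supertriple system structure on $T$, and (ii) $\psi$ is a 3-cocycle of $T$, i.e. $d^3\psi=0$.
   Context: A $\delta$-Jordan Lie supertriple system ($\delta\in\{1,-1\}$) is a $\mathbb{Z}_2$-graded vector space $T$ with a trilinear product $[\cdot,\cdot,\cdot]$ such that, for all homogeneous $a,b,c,d,e$ (with $|a|$ the degree of $a$): $|[a,b,c]|=|a|+|b|+|c|$; $[b,a,c]=-\delta(-1)^{|a||b|}[a,b,c]$; $(-1)^{|a||c|}[a,b,c]+(-1)^{|b||a|}[b,c,a]+(-1)^{|c||b|}[c,a,b]=0$; and $[a,b,[c,d,e]]=[[a,b,c],d,e]+(-1)^{|c|(|a|+|b|)}[c,[a,b,d],e]+\delta(-1)^{(|a|+|b|)(|c|+|d|)}[c,d,[a,b,e]]$. "$T_\lambda$ is a $\delta$-Jordan Lie supertriple system" means these identities hold for $[\cdot,\cdot,\cdot]_\lambda$ identically in $\lambda$. With the adjoint representation $\theta(a,b)(x)=(-1)^{|x|(|a|+|b|)}[x,a,b]$, $D(a,b)(x)=\delta[a,b,x]$, and for a trilinear map $f$ of degree $|f|$ (here $|\psi|=0$): $d^{3}f(x_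1,\dots,x_5)=(-1)^{(|f|+|x_1|+|x_2|+|x_3|)(|x_4|+|x_5|)}\theta(x_4,x_5)f(x_1,x_2,x_3)-\delta(-1)^{(|f|+|x_1|+|x_2|)(|x_3|+|x_5|)+|x_4||x_5|}\theta(x_3,x_5)f(x_1,x_2,x_4)-\delta(-1)^{|f|(|x_1|+|x_2|)}D(x_1,x_2)f(x_3,x_4,x_5)+(-1)^{(|f|+|x_1|+|x_2|)(|x_3|+|x_4|)}D(x_3,x_4)f(x_1,x_2,x_5)+f([x_1,x_2,x_3],x_4,x_5)-f(x_1,x_2,[x_3,x_4,x_5])+(-1)^{|x_3|(|x_1|+|x_2|)}f(x_3,[x_1,x_2,x_4],x_5)+\delta(-1)^{(|x_1|+|x_2|)(|x_3|+|x_4|)}f(x_3,x_4,[x_1,x_2,x_5])$ for homogeneous $x_i$. *)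

theory Defs
  imports Complex_Main "HOL-Library.Function_Algebras"
begin

text \<open>Degrees of homogeneous elements are the naturals 0 and 1.\<close>

definition lsubspace :: "('k::field \<Rightarrow> 'v::ab_group_add \<Rightarrow> 'v) \<Rightarrow> 'v set \<Rightarrow> bool" where
  "lsubspace sm S \<longleftrightarrow> 0 \<in> S \<and> (\<forall>x\<in>S. \<forall>y\<in>S. x + y \<in> S) \<and> (\<forall>c. \<forall>x\<in>S. sm c x \<in> S)"

definition graded_vs :: "('k::field \<Rightarrow> 'v::ab_group_add \<Rightarrow> 'v) \<Rightarrow> 'v set \<Rightarrow> 'v set \<Rightarrow> bool" where
  "graded_vs sm V0 V1 \<longleftrightarrow> vector_space sm \<and> lsubspace sm V0 \<and> lsubspace sm V1 \<and>
     (\<forall>x. \<exists>!p. fst p \<in> V0 \<and> snd p \<in> V1 \<and> x = fst p + snd p)"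

definition hom :: "'v set \<Rightarrow> 'v set \<Rightarrow> 'v \<Rightarrow> nat \<Rightarrow> bool" where
  "hom V0 V1 x i \<longleftrightarrow> (i = 0 \<and> x \<in> V0) \<or> (i = 1 \<and> x \<in> V1)"

definition sgn1 :: "nat \<Rightarrow> 'k::field" where
  "sgn1 n = (-1) ^ n"

definition trilinear :: "('k::field \<Rightarrow> 'v::ab_group_add \<Rightarrow> 'v) \<Rightarrow> ('v \<Rightarrow> 'v \<Rightarrow> 'v \<Rightarrow> 'v) \<Rightarrow> bool" where
  "trilinear sm f \<longleftrightarrow> (\<forall>a b c.
      Vector_Spaces.linear sm sm (\<lambda>x. f x b c) \<and>
      Vector_Spaces.linear sm sm (\<lambda>x. f a x c) \<and>
      Vector_Spaces.linear sm sm (\<lambda>x. f a b x))"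

definition graded_map :: "'v set \<Rightarrow> 'v set \<Rightarrow> nat \<Rightarrow> ('v \<Rightarrow> 'v \<Rightarrow> 'v \<Rightarrow> 'v) \<Rightarrow> bool" where
  "graded_map V0 V1 fd f \<longleftrightarrow> (\<forall>a b c i j k. hom V0 V1 a i \<longrightarrow> hom V0 V1 b j \<longrightarrow> hom V0 V1 c k \<longrightarrow>
      hom V0 V1 (f a b c) ((fd + i + j + k) mod 2))"

definition JLSTS :: "('k::field \<Rightarrow> 'v::ab_group_add \<Rightarrow> 'v) \<Rightarrow> 'v set \<Rightarrow> 'v set \<Rightarrow> 'k
    \<Rightarrow> ('v \<Rightarrow> 'v \<Rightarrow> 'v \<Rightarrow> 'v) \<Rightarrow> bool" where
  "JLSTS sm V0 V1 \<delta> br \<longleftrightarrow> (\<delta> = 1 \<or> \<delta> = -1) \<and> trilinear sm br \<and> graded_map V0 V1 0 br \<and>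
    (\<forall>a b c d e i j k l m.
       hom V0 V1 a i \<longrightarrow> hom V0 V1 b j \<longrightarrow> hom V0 V1 c k \<longrightarrow> hom V0 V1 d l \<longrightarrow> hom V0 V1 e m \<longrightarrow>
       br b a c = sm (- \<delta> * sgn1 (i * j)) (br a b c) \<and>
       sm (sgn1 (i * k)) (br a b c) + sm (sgn1 (j * i)) (br b c a) + sm (sgn1 (k * j)) (br c a b) = 0 \<and>
       br a b (br c d e) = br (br a b c) d e + sm (sgn1 (k * (i + j))) (br c (br a b d) e)
                            + sm (\<delta> * sgn1 ((i + j) * (k + l))) (br c d (br a b e)))"

definition theta :: "('k::field \<Rightarrow> 'v::ab_group_add \<Rightarrow> 'v) \<Rightarrow> ('v \<Rightarrow> 'v \<Rightarrow> 'v \<Rightarrow> 'v)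
    \<Rightarrow> 'v \<Rightarrow> nat \<Rightarrow> 'v \<Rightarrow> nat \<Rightarrow> 'v \<Rightarrow> nat \<Rightarrow> 'v" where
  "theta sm br a na b nb x nx = sm (sgn1 (nx * (na + nb))) (br x a b)"

definition Dop :: "('k::field \<Rightarrow> 'v::ab_group_add \<Rightarrow> 'v) \<Rightarrow> 'k \<Rightarrow> ('v \<Rightarrow> 'v \<Rightarrow> 'v \<Rightarrow> 'v)
    \<Rightarrow> 'v \<Rightarrow> 'v \<Rightarrow> 'v \<Rightarrow> 'v" where
  "Dop sm \<delta> br a b x = sm \<delta> (br a b x)"

definition d3 :: "('k::field \<Rightarrow> 'v::ab_group_add \<Rightarrow> 'v) \<Rightarrow> 'k \<Rightarrow> ('v \<Rightarrow> 'v \<Rightarrow> 'v \<Rightarrow> 'v)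
    \<Rightarrow> ('v \<Rightarrow> 'v \<Rightarrow> 'v \<Rightarrow> 'v) \<Rightarrow> nat
    \<Rightarrow> 'v \<Rightarrow> nat \<Rightarrow> 'v \<Rightarrow> nat \<Rightarrow> 'v \<Rightarrow> nat \<Rightarrow> 'v \<Rightarrow> nat \<Rightarrow> 'v \<Rightarrow> nat \<Rightarrow> 'v" where
  "d3 sm \<delta> br f fd x1 n1 x2 n2 x3 n3 x4 n4 x5 n5 =
     sm (sgn1 ((fd + n1 + n2 + n3) * (n4 + n5)))
        (theta sm br x4 n4 x5 n5 (f x1 x2 x3) (fd + n1 + n2 + n3))
   - sm (\<delta> * sgn1 ((fd + n1 + n2) * (n3 + n5) + n4 * n5))
        (theta sm br x3 n3 x5 n5 (f x1 x2 x4) (fd + n1 + n2 + n4))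
   - sm (\<delta> * sgn1 (fd * (n1 + n2))) (Dop sm \<delta> br x1 x2 (f x3 x4 x5))
   + sm (sgn1 ((fd + n1 + n2) * (n3 + n4))) (Dop sm \<delta> br x3 x4 (f x1 x2 x5))
   + f (br x1 x2 x3) x4 x5
   - f x1 x2 (br x3 x4 x5)
   + sm (sgn1 (n3 * (n1 + n2))) (f x3 (br x1 x2 x4) x5)
   + sm (\<delta> * sgn1 ((n1 + n2) * (n3 + n4))) (f x3 x4 (br x1 x2 x5))"

definition cocycle3 :: "('k::field \<Rightarrow> 'v::ab_group_add \<Rightarrow> 'v) \<Rightarrow> 'v set \<Rightarrow> 'v set \<Rightarrow> 'k
    \<Rightarrow> ('v \<Rightarrow> 'v \<Rightarrow> 'v \<Rightarrow> 'v) \<Rightarrow> ('v \<Rightarrow> 'v \<Rightarrow> 'v \<Rightarrow> 'v) \<Rightarrow> nat \<Rightarrow> bool" where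
  "cocycle3 sm V0 V1 \<delta> br f fd \<longleftrightarrow> (\<forall>x1 n1 x2 n2 x3 n3 x4 n4 x5 n5.
     hom V0 V1 x1 n1 \<longrightarrow> hom V0 V1 x2 n2 \<longrightarrow> hom V0 V1 x3 n3 \<longrightarrow> hom V0 V1 x4 n4 \<longrightarrow> hom V0 V1 x5 n5 \<longrightarrow>
     d3 sm \<delta> br f fd x1 n1 x2 n2 x3 n3 x4 n4 x5 n5 = 0)"

text \<open>Formal variable lambda: T_lambda is realised on T[[lambda]], modelled as sequences
  nat => 'v of coefficients, with coefficientwise scalar multiplication and grading, and the
  product extended lambda-trilinearly: [P,Q,R]_lambda = [P,Q,R] + lambda psi(P,Q,R).
  An identity holds "identically in lambda" iff it holds in T[[lambda]].\<close>

definition ext_sm :: "('k \<Rightarrow> 'v \<Rightarrow> 'v) \<Rightarrow> 'k \<Rightarrow> (nat \<Rightarrow> 'v) \<Rightarrow> (nat \<Rightarrow> 'v)" where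
  "ext_sm sm c P = (\<lambda>n. sm c (P n))"

definition extV :: "'v set \<Rightarrow> (nat \<Rightarrow> 'v) set" where
  "extV V = {P. \<forall>n. P n \<in> V}"

definition conv3 :: "('v::comm_monoid_add \<Rightarrow> 'v \<Rightarrow> 'v \<Rightarrow> 'v) \<Rightarrow> (nat \<Rightarrow> 'v) \<Rightarrow> (nat \<Rightarrow> 'v) \<Rightarrow> (nat \<Rightarrow> 'v) \<Rightarrow> nat \<Rightarrow> 'v" where
  "conv3 f P Q R n = (\<Sum>i\<le>n. \<Sum>j\<le>n - i. f (P i) (Q j) (R (n - i - j)))"

definition lam_br :: "('v::comm_monoid_add \<Rightarrow> 'v \<Rightarrow> 'v \<Rightarrow> 'v) \<Rightarrow> ('v \<Rightarrow> 'v \<Rightarrow> 'v \<Rightarrow> 'v)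
    \<Rightarrow> (nat \<Rightarrow> 'v) \<Rightarrow> (nat \<Rightarrow> 'v) \<Rightarrow> (nat \<Rightarrow> 'v) \<Rightarrow> (nat \<Rightarrow> 'v)" where
  "lam_br br psi P Q R = (\<lambda>n. conv3 br P Q R n + (if n = 0 then 0 else conv3 psi P Q R (n - 1)))"

end

theory Submission
  imports Defs
begin
definition T3 :: "nat \<Rightarrow> (nat \<times> nat \<times> nat) set" where
  "T3 n = {(i,j,k). i + j + k = n}"
definition T5 :: "nat \<Rightarrow> (nat \<times> nat \<times> nat \<times> nat \<times> nat) set" where
  "T5 n = {(a,b,c,d,e). a + b + c + d + e = n}"

lemma finite_T3[simp]: "finite (T3 n)"
  by (rule finite_subset[of _ "{..n}\<times>{..n}\<times>{..n}"]) (auto simp: T3_def)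
lemma finite_T5[simp]: "finite (T5 n)"
  by (rule finite_subset[of _ "{..n}\<times>{..n}\<times>{..n}\<times>{..n}\<times>{..n}"]) (auto simp: T5_def)

definition tadd :: "('v::ab_group_add \<Rightarrow> 'v \<Rightarrow> 'v \<Rightarrow> 'v) \<Rightarrow> bool" where
  "tadd f \<longleftrightarrow> (\<forall>a b c x. f (a+x) b c = f a b c + f x b c \<and> f a (b+x) c = f a b c + f a x c
     \<and> f a b (c+x) = f a b c + f a b x)"

lemma tadd_zero:
  assumes "tadd f" shows "f 0 b c = 0" "f a 0 c = 0" "f a b 0 = 0"
proof -
  have "f (0+0) b c = f 0 b c + f 0 b c" "f a (0+0) c = f a 0 c + f a 0 c"
    "f a b (0+0) = f a b 0 + f a b 0" using assms unfolding tadd_def by blast+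
  then show "f 0 b c = 0" "f a 0 c = 0" "f a b 0 = 0" by simp_all
qed

lemma tadd_sum:
  assumes "tadd f"
  shows "f (sum g A) b c = (\<Sum>x\<in>A. f (g x) b c)"
    "f a (sum g A) c = (\<Sum>x\<in>A. f a (g x) c)"
    "f a b (sum g A) = (\<Sum>x\<in>A. f a b (g x))"
proof -
  show "f (sum g A) b c = (\<Sum>x\<in>A. f (g x) b c)"
    by (induct A rule: infinite_finite_induct)
       (use assms in \<open>auto simp: tadd_zero tadd_def\<close>)
  show "f a (sum g A) c = (\<Sum>x\<in>A. f a (g x) c)"
    by (induct A rule: infinite_finite_induct)
       (use assms in \<open>auto simp: tadd_zero tadd_def\<close>)
  show "f a b (sum g A) = (\<Sum>x\<in>A. f a b (g x))"
    by (induct A rule: infinite_finite_induct)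
       (use assms in \<open>auto simp: tadd_zero tadd_def\<close>)
qed

lemma conv3_T3: "conv3 f P Q R n = (\<Sum>(i,j,k)\<in>T3 n. f (P i) (Q j) (R k))"
proof -
  have "conv3 f P Q R n = (\<Sum>(i,j)\<in>Sigma {..n} (\<lambda>i. {..n-i}). f (P i) (Q j) (R (n-i-j)))"
    unfolding conv3_def by (subst sum.Sigma) auto
  also have "\<dots> = (\<Sum>(i,j,k)\<in>T3 n. f (P i) (Q j) (R k))"
    by (rule sum.reindex_bij_witness[where i="\<lambda>(i,j,k). (i,j)" and j="\<lambda>(i,j). (i,j,n-i-j)"])
       (auto simp: T3_def)
  finally show ?thesis .
qed

lemma conv3_swap12: "conv3 f Q P R n = conv3 (\<lambda>x y z. f y x z) P Q R n"
  unfolding conv3_T3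
  by (rule sum.reindex_bij_witness[where i="\<lambda>(i,j,k). (j,i,k)" and j="\<lambda>(i,j,k). (j,i,k)"])
     (auto simp: T3_def)
lemma conv3_swap23: "conv3 f P R Q n = conv3 (\<lambda>x y z. f x z y) P Q R n"
  unfolding conv3_T3
  by (rule sum.reindex_bij_witness[where i="\<lambda>(i,j,k). (i,k,j)" and j="\<lambda>(i,j,k). (i,k,j)"])
     (auto simp: T3_def)
lemma conv3_rev: "conv3 f R Q P n = conv3 (\<lambda>x y z. f z y x) P Q R n"
  unfolding conv3_T3
  by (rule sum.reindex_bij_witness[where i="\<lambda>(i,j,k). (k,j,i)" and j="\<lambda>(i,j,k). (k,j,i)"])
     (auto simp: T3_def)
lemma conv3_rot: "conv3 f Q R P n = conv3 (\<lambda>x y z. f y z x) P Q R n"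
  unfolding conv3_T3
  by (rule sum.reindex_bij_witness[where i="\<lambda>(i,j,k). (j,k,i)" and j="\<lambda>(i,j,k). (k,i,j)"])
     (auto simp: T3_def)

definition sh :: "(nat \<Rightarrow> 'v::zero) \<Rightarrow> nat \<Rightarrow> 'v" where
  "sh X = (\<lambda>n. case n of 0 \<Rightarrow> 0 | Suc m \<Rightarrow> X m)"

lemma sh_simps[simp]: "sh X 0 = 0" "sh X (Suc m) = X m"
  by (simp_all add: sh_def)

lemma conv3_sh3:
  assumes z: "\<And>a b. f a b 0 = 0"
  shows "conv3 f P Q (sh X) = sh (conv3 f P Q X)"
proof
  fix n show "conv3 f P Q (sh X) n = sh (conv3 f P Q X) n"
  proof (cases n)
    case 0 then show ?thesis by (simp add: conv3_def z)
  next
    case (Suc m)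
    have "conv3 f P Q (sh X) (Suc m) = (\<Sum>i\<le>m. \<Sum>j\<le>Suc m - i. f (P i) (Q j) (sh X (Suc m - i - j)))"
      unfolding conv3_def by (simp add: z)
    also have "\<dots> = (\<Sum>i\<le>m. \<Sum>j\<le>m - i. f (P i) (Q j) (X (m - i - j)))"
    proof (rule sum.cong[OF refl])
      fix i assume "i \<in> {..m}"
      then have im: "i \<le> m" by simp
      then have "Suc m - i = Suc (m - i)" by simp
      then have "(\<Sum>j\<le>Suc m - i. f (P i) (Q j) (sh X (Suc m - i - j)))
          = (\<Sum>j\<le>m - i. f (P i) (Q j) (sh X (Suc m - i - j)))"
        by (simp add: z)
      also have "\<dots> = (\<Sum>j\<le>m - i. f (P i) (Q j) (X (m - i - j)))"
        by (rule sum.cong[OF refl]) (use im in \<open>auto simp: Suc_diff_le\<close>)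
      finally show "(\<Sum>j\<le>Suc m - i. f (P i) (Q j) (sh X (Suc m - i - j)))
          = (\<Sum>j\<le>m - i. f (P i) (Q j) (X (m - i - j)))" .
    qed
    finally show ?thesis using Suc by (simp add: conv3_def)
  qed
qed

lemma conv3_sh1:
  assumes z: "\<And>b c. f 0 b c = 0"
  shows "conv3 f (sh X) Q R = sh (conv3 f X Q R)"
proof -
  have "conv3 f (sh X) Q R = conv3 (\<lambda>x y z. f z y x) R Q (sh X)"
    by (rule ext) (simp add: conv3_rev[of _ R Q "sh X"])
  also have "\<dots> = sh (conv3 (\<lambda>x y z. f z y x) R Q X)"
    by (rule conv3_sh3) (simp add: z)
  also have "conv3 (\<lambda>x y z. f z y x) R Q X = conv3 f X Q R"
    by (rule ext) (simp add: conv3_rev[of _ R Q X])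
  finally show ?thesis .
qed

lemma conv3_sh2:
  assumes z: "\<And>a c. f a 0 c = 0"
  shows "conv3 f P (sh X) R = sh (conv3 f P X R)"
proof -
  have "conv3 f P (sh X) R = conv3 (\<lambda>x y z. f x z y) P R (sh X)"
    by (rule ext) (simp add: conv3_swap23[of _ P R "sh X"])
  also have "\<dots> = sh (conv3 (\<lambda>x y z. f x z y) P R X)"
    by (rule conv3_sh3) (simp add: z)
  also have "conv3 (\<lambda>x y z. f x z y) P R X = conv3 f P X R"
    by (rule ext) (simp add: conv3_swap23[of _ P R X])
  finally show ?thesis .
qed

definition conv5 :: "('v::comm_monoid_add \<Rightarrow> 'v \<Rightarrow> 'v \<Rightarrow> 'v \<Rightarrow> 'v \<Rightarrow> 'v) \<Rightarrow> (nat \<Rightarrow> 'v) \<Rightarrow> (nat \<Rightarrow> 'v)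
   \<Rightarrow> (nat \<Rightarrow> 'v) \<Rightarrow> (nat \<Rightarrow> 'v) \<Rightarrow> (nat \<Rightarrow> 'v) \<Rightarrow> nat \<Rightarrow> 'v" where
  "conv5 h P Q R S U n = (\<Sum>(a,b,c,d,e)\<in>T5 n. h (P a) (Q b) (R c) (S d) (U e))"

lemma nest3:
  assumes "tadd f"
  shows "conv3 f P Q (conv3 g R S U) = conv5 (\<lambda>a b c d e. f a b (g c d e)) P Q R S U"
proof
  fix n
  have "conv3 f P Q (conv3 g R S U) n = (\<Sum>x\<in>T3 n. \<Sum>y\<in>T3 (snd (snd x)).
      f (P (fst x)) (Q (fst (snd x))) (g (R (fst y)) (S (fst (snd y))) (U (snd (snd y)))))"
    by (simp add: conv3_T3 tadd_sum[OF assms] case_prod_beta)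
  also have "\<dots> = (\<Sum>(x,y)\<in>Sigma (T3 n) (\<lambda>x. T3 (snd (snd x))).
      f (P (fst x)) (Q (fst (snd x))) (g (R (fst y)) (S (fst (snd y))) (U (snd (snd y)))))"
    by (rule sum.Sigma) auto
  also have "\<dots> = conv5 (\<lambda>a b c d e. f a b (g c d e)) P Q R S U n"
    unfolding conv5_def
    by (rule sum.reindex_bij_witness[where i = "\<lambda>(a,b,c,d,e). ((a,b,c+d+e),(c,d,e))"
          and j = "\<lambda>((i,j,k),(a,b,c)). (i,j,a,b,c)"]) (auto simp: T3_def T5_def)
  finally show "conv3 f P Q (conv3 g R S U) n = conv5 (\<lambda>a b c d e. f a b (g c d e)) P Q R S U n" .
qed

lemma nest1:
  assumes "tadd f"
  shows "conv3 f (conv3 g P Q R) S U = conv5 (\<lambda>a b c d e. f (g a b c) d e) P Q R S U"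
proof
  fix n
  have "conv3 f (conv3 g P Q R) S U n = (\<Sum>x\<in>T3 n. \<Sum>y\<in>T3 (fst x).
      f (g (P (fst y)) (Q (fst (snd y))) (R (snd (snd y)))) (S (fst (snd x))) (U (snd (snd x))))"
    by (simp add: conv3_T3 tadd_sum[OF assms] case_prod_beta)
  also have "\<dots> = (\<Sum>(x,y)\<in>Sigma (T3 n) (\<lambda>x. T3 (fst x)).
      f (g (P (fst y)) (Q (fst (snd y))) (R (snd (snd y)))) (S (fst (snd x))) (U (snd (snd x))))"
    by (rule sum.Sigma) auto
  also have "\<dots> = conv5 (\<lambda>a b c d e. f (g a b c) d e) P Q R S U n"
    unfolding conv5_def
    by (rule sum.reindex_bij_witness[where i = "\<lambda>(a,b,c,d,e). ((a+b+c,d,e),(a,b,c))"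
          and j = "\<lambda>((i,j,k),(a,b,c)). (a,b,c,j,k)"]) (auto simp: T3_def T5_def)
  finally show "conv3 f (conv3 g P Q R) S U n = conv5 (\<lambda>a b c d e. f (g a b c) d e) P Q R S U n" .
qed

lemma nest2:
  assumes "tadd f"
  shows "conv3 f R (conv3 g P Q S) U = conv5 (\<lambda>a b c d e. f c (g a b d) e) P Q R S U"
proof
  fix n
  have "conv3 f R (conv3 g P Q S) U n = (\<Sum>x\<in>T3 n. \<Sum>y\<in>T3 (fst (snd x)).
      f (R (fst x)) (g (P (fst y)) (Q (fst (snd y))) (S (snd (snd y)))) (U (snd (snd x))))"
    by (simp add: conv3_T3 tadd_sum[OF assms] case_prod_beta)
  also have "\<dots> = (\<Sum>(x,y)\<in>Sigma (T3 n) (\<lambda>x. T3 (fst (snd x))).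
      f (R (fst x)) (g (P (fst y)) (Q (fst (snd y))) (S (snd (snd y)))) (U (snd (snd x))))"
    by (rule sum.Sigma) auto
  also have "\<dots> = conv5 (\<lambda>a b c d e. f c (g a b d) e) P Q R S U n"
    unfolding conv5_def
    by (rule sum.reindex_bij_witness[where i = "\<lambda>(a,b,c,d,e). ((c,a+b+d,e),(a,b,d))"
          and j = "\<lambda>((i,j,k),(a,b,c)). (a,b,i,c,k)"]) (auto simp: T3_def T5_def)
  finally show "conv3 f R (conv3 g P Q S) U n = conv5 (\<lambda>a b c d e. f c (g a b d) e) P Q R S U n" .
qed

lemma nest3':
  assumes "tadd f"
  shows "conv3 f R S (conv3 g P Q U) = conv5 (\<lambda>a b c d e. f c d (g a b e)) P Q R S U"
proof
  fix n
  have "conv3 f R S (conv3 g P Q U) n = (\<Sum>x\<in>T3 n. \<Sum>y\<in>T3 (snd (snd x)).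
      f (R (fst x)) (S (fst (snd x))) (g (P (fst y)) (Q (fst (snd y))) (U (snd (snd y)))))"
    by (simp add: conv3_T3 tadd_sum[OF assms] case_prod_beta)
  also have "\<dots> = (\<Sum>(x,y)\<in>Sigma (T3 n) (\<lambda>x. T3 (snd (snd x))).
      f (R (fst x)) (S (fst (snd x))) (g (P (fst y)) (Q (fst (snd y))) (U (snd (snd y)))))"
    by (rule sum.Sigma) auto
  also have "\<dots> = conv5 (\<lambda>a b c d e. f c d (g a b e)) P Q R S U n"
    unfolding conv5_def
    by (rule sum.reindex_bij_witness[where i = "\<lambda>(a,b,c,d,e). ((c,d,a+b+e),(a,b,e))"
          and j = "\<lambda>((i,j,k),(a,b,c)). (a,b,i,j,c)"]) (auto simp: T3_def T5_def)
  finally show "conv3 f R S (conv3 g P Q U) n = conv5 (\<lambda>a b c d e. f c d (g a b e)) P Q R S U n" .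
qed

lemma conv3_add:
  assumes "tadd f"
  shows "conv3 f (A + B) Q R = conv3 f A Q R + conv3 f B Q R"
    "conv3 f P (A + B) R = conv3 f P A R + conv3 f P B R"
    "conv3 f P Q (A + B) = conv3 f P Q A + conv3 f P Q B"
  using assms by (auto simp: conv3_def tadd_def sum.distrib fun_eq_iff)

lemma conv5_add:
  "conv5 (\<lambda>a b c d e. h1 a b c d e + h2 a b c d e) P Q R S U
   = conv5 h1 P Q R S U + conv5 h2 P Q R S U"
  by (auto simp: conv5_def sum.distrib fun_eq_iff case_prod_beta)

lemma sh_add: "sh (A + B :: nat \<Rightarrow> 'v::monoid_add) = sh A + sh B"
  by (rule ext) (simp add: sh_def split: nat.split)

lemma lam_eq: "lam_br br psi P Q R = conv3 br P Q R + sh (conv3 psi P Q R)"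
  by (rule ext) (simp add: lam_br_def sh_def split: nat.split)

lemma expandA:
  assumes "tadd br" "tadd psi"
  shows "lam_br br psi P Q (lam_br br psi R S U) =
    conv5 (\<lambda>a b c d e. br a b (br c d e)) P Q R S U
    + sh (conv5 (\<lambda>a b c d e. br a b (psi c d e) + psi a b (br c d e)) P Q R S U)
    + sh (sh (conv5 (\<lambda>a b c d e. psi a b (psi c d e)) P Q R S U))"
  using assms
  by (simp add: lam_eq conv3_add conv3_sh1 conv3_sh2 conv3_sh3 tadd_zero sh_add nest3 conv5_add add_ac)

lemma expandB:
  assumes "tadd br" "tadd psi"
  shows "lam_br br psi (lam_br br psi P Q R) S U =
    conv5 (\<lambda>a b c d e. br (br a b c) d e) P Q R S U
    + sh (conv5 (\<lambda>a b c d e. br (psi a b c) d e + psi (br a b c) d e) P Q R S U)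
    + sh (sh (conv5 (\<lambda>a b c d e. psi (psi a b c) d e) P Q R S U))"
  using assms
  by (simp add: lam_eq conv3_add conv3_sh1 conv3_sh2 conv3_sh3 tadd_zero sh_add nest1 conv5_add add_ac)

lemma expandC:
  assumes "tadd br" "tadd psi"
  shows "lam_br br psi R (lam_br br psi P Q S) U =
    conv5 (\<lambda>a b c d e. br c (br a b d) e) P Q R S U
    + sh (conv5 (\<lambda>a b c d e. br c (psi a b d) e + psi c (br a b d) e) P Q R S U)
    + sh (sh (conv5 (\<lambda>a b c d e. psi c (psi a b d) e) P Q R S U))"
  using assms
  by (simp add: lam_eq conv3_add conv3_sh1 conv3_sh2 conv3_sh3 tadd_zero sh_add nest2 conv5_add add_ac)

lemma expandE:
  assumes "tadd br" "tadd psi"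
  shows "lam_br br psi R S (lam_br br psi P Q U) =
    conv5 (\<lambda>a b c d e. br c d (br a b e)) P Q R S U
    + sh (conv5 (\<lambda>a b c d e. br c d (psi a b e) + psi c d (br a b e)) P Q R S U)
    + sh (sh (conv5 (\<lambda>a b c d e. psi c d (psi a b e)) P Q R S U))"
  using assms
  by (simp add: lam_eq conv3_add conv3_sh1 conv3_sh2 conv3_sh3 tadd_zero sh_add nest3' conv5_add add_ac)

lemma hom_deg: "hom V0 V1 x i \<Longrightarrow> i = 0 \<or> i = 1"
  by (auto simp: hom_def)

lemma sgn1_sq[simp]: "sgn1 n * (sgn1 n :: 'k::field) = 1"
  by (simp add: sgn1_def power_add[symmetric] minus_one_power_iff)

lemma tri_props:
  assumes "trilinear sm f"
  shows "tadd f" "f (sm c a) b d = sm c (f a b d)" "f a (sm c b) d = sm c (f a b d)"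
    "f a b (sm c d) = sm c (f a b d)"
proof -
  have L: "\<And>a b c. (\<forall>x y. f (x + y) b c = f x b c + f y b c) \<and> (\<forall>c' x. f (sm c' x) b c = sm c' (f x b c))
    \<and> (\<forall>x y. f a (x + y) c = f a x c + f a y c) \<and> (\<forall>c' x. f a (sm c' x) c = sm c' (f a x c))
    \<and> (\<forall>x y. f a b (x + y) = f a b x + f a b y) \<and> (\<forall>c' x. f a b (sm c' x) = sm c' (f a b x))"
    using assms unfolding trilinear_def Vector_Spaces.linear_iff by blast
  show "tadd f" unfolding tadd_def using L by blast
  show "f (sm c a) b d = sm c (f a b d)" "f a (sm c b) d = sm c (f a b d)"
    "f a b (sm c d) = sm c (f a b d)" using L by blast+
qed

locale S = vector_space sm for sm :: "'k::field \<Rightarrow> 'v::ab_group_add \<Rightarrow> 'v" +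
  fixes V0 V1 :: "'v set" and \<delta> :: 'k and br psi :: "'v \<Rightarrow> 'v \<Rightarrow> 'v \<Rightarrow> 'v"
  assumes gvs: "graded_vs sm V0 V1" and JL: "JLSTS sm V0 V1 \<delta> br"
    and trp: "trilinear sm psi" and gp: "graded_map V0 V1 0 psi"
begin

lemma trb: "trilinear sm br" using JL by (simp add: JLSTS_def)
lemma gb: "graded_map V0 V1 0 br" using JL by (simp add: JLSTS_def)
lemma delta: "\<delta> = 1 \<or> \<delta> = -1" using JL by (simp add: JLSTS_def)

lemma tadd_br: "tadd br" and tadd_psi: "tadd psi"
  using tri_props[OF trb] tri_props[OF trp] by blast+

lemma zeros[simp]: "br 0 b c = 0" "br a 0 c = 0" "br a b 0 = 0"
  "psi 0 b c = 0" "psi a 0 c = 0" "psi a b 0 = 0"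
  using tadd_zero[OF tadd_br] tadd_zero[OF tadd_psi] by blast+

lemma br_skew: "hom V0 V1 a i \<Longrightarrow> hom V0 V1 b j \<Longrightarrow> hom V0 V1 c k \<Longrightarrow>
   br b a c = sm (- \<delta> * sgn1 (i * j)) (br a b c)"
  using JL unfolding JLSTS_def by blast

lemma d3_rel:
  assumes h: "hom V0 V1 x1 n1" "hom V0 V1 x2 n2" "hom V0 V1 x3 n3" "hom V0 V1 x4 n4" "hom V0 V1 x5 n5"
  shows "d3 sm \<delta> br psi 0 x1 n1 x2 n2 x3 n3 x4 n4 x5 n5 =
     (br (psi x1 x2 x3) x4 x5 + psi (br x1 x2 x3) x4 x5)
     + sm (sgn1 (n3 * (n1 + n2))) (br x3 (psi x1 x2 x4) x5 + psi x3 (br x1 x2 x4) x5)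
     + sm (\<delta> * sgn1 ((n1 + n2) * (n3 + n4))) (br x3 x4 (psi x1 x2 x5) + psi x3 x4 (br x1 x2 x5))
     - (br x1 x2 (psi x3 x4 x5) + psi x1 x2 (br x3 x4 x5))"
proof -
  have hX: "hom V0 V1 (psi x1 x2 x4) ((0+n1+n2+n4) mod 2)"
    using gp h unfolding graded_map_def by blast
  have sk: "br (psi x1 x2 x4) x3 x5 = sm (- \<delta> * sgn1 (n3 * ((0+n1+n2+n4) mod 2))) (br x3 (psi x1 x2 x4) x5)"
    by (rule br_skew[OF h(3) hX h(5)])
  have d: "n1 = 0 \<or> n1 = 1" "n2 = 0 \<or> n2 = 1" "n3 = 0 \<or> n3 = 1" "n4 = 0 \<or> n4 = 1" "n5 = 0 \<or> n5 = 1"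
    using h unfolding hom_def by auto
  have dd: "\<delta> * \<delta> = 1" using delta by auto
  have sg: "sgn1 ((n1+n2)*(n3+n5) + n4*n5) * sgn1 ((n1+n2+n4)*(n3+n5)) * sgn1 (n3 * ((n1+n2+n4) mod 2))
     = (sgn1 (n3 * (n1 + n2)) :: 'k)"
    using d by (elim disjE) (simp_all add: sgn1_def)
  have t1: "sm (sgn1 ((0+n1+n2+n3)*(n4+n5))) (sm (sgn1 ((0+n1+n2+n3)*(n4+n5))) (br (psi x1 x2 x3) x4 x5))
      = br (psi x1 x2 x3) x4 x5" by simp
  have c2: "\<delta> * sgn1 ((0+n1+n2)*(n3+n5) + n4*n5) * (sgn1 ((0+n1+n2+n4)*(n3+n5)) * (- \<delta> * sgn1 (n3 * ((0+n1+n2+n4) mod 2))))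
     = - ((\<delta>*\<delta>) * (sgn1 ((n1+n2)*(n3+n5) + n4*n5) * sgn1 ((n1+n2+n4)*(n3+n5)) * sgn1 (n3 * ((n1+n2+n4) mod 2))))"
    by (simp add: algebra_simps)
  have t2: "sm (\<delta> * sgn1 ((0+n1+n2)*(n3+n5) + n4*n5)) (sm (sgn1 ((0+n1+n2+n4)*(n3+n5))) (br (psi x1 x2 x4) x3 x5))
     = - sm (sgn1 (n3 * (n1 + n2))) (br x3 (psi x1 x2 x4) x5)"
    unfolding sk scale_scale c2 dd sg by simp
  have t3: "sm (\<delta> * sgn1 (0 * (n1 + n2))) (sm \<delta> (br x1 x2 (psi x3 x4 x5))) = br x1 x2 (psi x3 x4 x5)"
    by (simp add: dd sgn1_def)
  have t4: "sm (sgn1 ((0+n1+n2)*(n3+n4))) (sm \<delta> (br x3 x4 (psi x1 x2 x5)))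
     = sm (\<delta> * sgn1 ((n1 + n2) * (n3 + n4))) (br x3 x4 (psi x1 x2 x5))"
    by (simp add: mult.commute)
  show ?thesis
    unfolding d3_def theta_def Dop_def t1 t2 t3 t4 scale_right_distrib
    by (simp add: algebra_simps)
qed

end

definition es :: "'v::zero \<Rightarrow> nat \<Rightarrow> 'v" where "es x = (\<lambda>n. if n = 0 then x else 0)"

lemma lam_coef: "lam_br br psi P Q R n = conv3 br P Q R n + (case n of 0 \<Rightarrow> 0 | Suc m \<Rightarrow> conv3 psi P Q R m)"
  by (simp add: lam_br_def split: nat.split)

lemma hom_ext: "hom (extV V0) (extV V1) P i \<longleftrightarrow> (\<forall>n. hom V0 V1 (P n) i)"
  unfolding hom_def extV_def by auto

lemma T5_0: "T5 0 = {(0,0,0,0,0)}" by (auto simp: T5_def)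

lemma conv3_es:
  assumes "\<And>b c. f 0 b c = 0" "\<And>a c. f a 0 c = 0" "\<And>a b. f a b 0 = 0"
  shows "conv3 f (es a) (es b) (es c) n = (if n = 0 then f a b c else 0)"
proof (cases "n = 0")
  case True then show ?thesis by (simp add: conv3_def es_def)
next
  case False
  have "conv3 f (es a) (es b) (es c) n = 0"
    unfolding conv3_def
    by (rule sum.neutral, rule ballI, rule sum.neutral) (use False assms in \<open>auto simp: es_def\<close>)
  then show ?thesis using False by simp
qed

lemma conv5_es:
  assumes "\<And>b c d e. h 0 b c d e = 0" "\<And>a c d e. h a 0 c d e = 0" "\<And>a b d e. h a b 0 d e = 0"
    "\<And>a b c e. h a b c 0 e = 0" "\<And>a b c d. h a b c d 0 = 0"
  shows "conv5 h (es a) (es b) (es c) (es d) (es e) n = (if n = 0 then h a b c d e else 0)"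
proof (cases "n = 0")
  case True then show ?thesis by (simp add: conv5_def es_def T5_0)
next
  case False
  have "conv5 h (es a) (es b) (es c) (es d) (es e) n = 0"
    unfolding conv5_def
    by (rule sum.neutral) (use False assms in \<open>auto simp: es_def T5_def\<close>)
  then show ?thesis using False by simp
qed

lemma JL_parts:
  assumes "JLSTS sm V0 V1 \<delta> f" "hom V0 V1 a i" "hom V0 V1 b j" "hom V0 V1 c k" "hom V0 V1 d l" "hom V0 V1 e m"
  shows "f b a c = sm (- \<delta> * sgn1 (i * j)) (f a b c)"
    "sm (sgn1 (i * k)) (f a b c) + sm (sgn1 (j * i)) (f b c a) + sm (sgn1 (k * j)) (f c a b) = 0"
    "f a b (f c d e) = f (f a b c) d e + sm (sgn1 (k * (i + j))) (f c (f a b d) e)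
                            + sm (\<delta> * sgn1 ((i + j) * (k + l))) (f c d (f a b e))"
proof -
  note X = conjunct2[OF conjunct2[OF conjunct2[OF assms(1)[unfolded JLSTS_def]]], rule_format, OF assms(2-6)]
  show "f b a c = sm (- \<delta> * sgn1 (i * j)) (f a b c)" using X by (rule conjunct1)
  show "sm (sgn1 (i * k)) (f a b c) + sm (sgn1 (j * i)) (f b c a) + sm (sgn1 (k * j)) (f c a b) = 0"
    using X by (elim conjE)
  show "f a b (f c d e) = f (f a b c) d e + sm (sgn1 (k * (i + j))) (f c (f a b d) e)
                            + sm (\<delta> * sgn1 ((i + j) * (k + l))) (f c d (f a b e))"
    using X by (elim conjE)
qed

context S begin

lemma ls0: "lsubspace sm V0" using gvs[unfolded graded_vs_def] by (elim conjE)
lemma ls1: "lsubspace sm V1" using gvs[unfolded graded_vs_def] by (elim conjE)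

lemma hom_add: "hom V0 V1 x d \<Longrightarrow> hom V0 V1 y d \<Longrightarrow> hom V0 V1 (x + y) d"
  using ls0 ls1 unfolding lsubspace_def hom_def by auto

lemma hom_zero: "d = 0 \<or> d = 1 \<Longrightarrow> hom V0 V1 0 d"
  using ls0 ls1 unfolding lsubspace_def hom_def by auto

lemma hom_sum: "(\<And>x. x \<in> A \<Longrightarrow> hom V0 V1 (g x) d) \<Longrightarrow> d = 0 \<or> d = 1 \<Longrightarrow> hom V0 V1 (sum g A) d"
  by (induct A rule: infinite_finite_induct) (auto simp: hom_zero hom_add)

lemma hom_conv3:
  assumes "graded_map V0 V1 0 f" "\<forall>n. hom V0 V1 (P n) i" "\<forall>n. hom V0 V1 (Q n) j" "\<forall>n. hom V0 V1 (R n) k"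
  shows "hom V0 V1 (conv3 f P Q R n) ((0 + i + j + k) mod 2)"
  unfolding conv3_def
  by (rule hom_sum, rule hom_sum) (use assms in \<open>auto simp: graded_map_def\<close>)

lemma hom_es: "hom V0 V1 a i \<Longrightarrow> hom (extV V0) (extV V1) (es a) i"
proof -
  assume h: "hom V0 V1 a i"
  have "i = 0 \<or> i = 1" using hom_deg[OF h] .
  then have z: "hom V0 V1 0 i" by (rule hom_zero)
  show ?thesis unfolding hom_ext es_def by (simp add: h z)
qed

lemma conv3_comb1:
  assumes "\<And>a b c. h0 (P a) (Q b) (R c) = sm c1 (h1 (P a) (Q b) (R c))"
  shows "conv3 h0 P Q R n = sm c1 (conv3 h1 P Q R n)"
  by (simp add: conv3_def scale_sum_right assms)

lemma conv3_comb3: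
  assumes "\<And>a b c. sm c1 (h1 (P a) (Q b) (R c)) + sm c2 (h2 (P a) (Q b) (R c)) + sm c3 (h3 (P a) (Q b) (R c)) = 0"
  shows "sm c1 (conv3 h1 P Q R n) + sm c2 (conv3 h2 P Q R n) + sm c3 (conv3 h3 P Q R n) = 0"
proof -
  have "sm c1 (conv3 h1 P Q R n) + sm c2 (conv3 h2 P Q R n) + sm c3 (conv3 h3 P Q R n)
     = (\<Sum>i\<le>n. \<Sum>j\<le>n-i. sm c1 (h1 (P i) (Q j) (R (n-i-j))) + sm c2 (h2 (P i) (Q j) (R (n-i-j)))
          + sm c3 (h3 (P i) (Q j) (R (n-i-j))))"
    by (simp add: conv3_def scale_sum_right sum.distrib)
  also have "\<dots> = 0" by (simp add: assms)
  finally show ?thesis .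
qed

lemma conv5_comb:
  assumes "\<And>a b c d e. h0 (P a) (Q b) (R c) (W d) (U e) = h1 (P a) (Q b) (R c) (W d) (U e)
     + sm c1 (h2 (P a) (Q b) (R c) (W d) (U e)) + sm c2 (h3 (P a) (Q b) (R c) (W d) (U e))"
  shows "conv5 h0 P Q R W U n = conv5 h1 P Q R W U n + sm c1 (conv5 h2 P Q R W U n) + sm c2 (conv5 h3 P Q R W U n)"
proof -
  have "conv5 h0 P Q R W U n = (\<Sum>(a,b,c,d,e)\<in>T5 n. h1 (P a) (Q b) (R c) (W d) (U e)
     + sm c1 (h2 (P a) (Q b) (R c) (W d) (U e)) + sm c2 (h3 (P a) (Q b) (R c) (W d) (U e)))"
    unfolding conv5_def by (rule sum.cong) (auto simp: assms)
  also have "\<dots> = conv5 h1 P Q R W U n + sm c1 (conv5 h2 P Q R W U n) + sm c2 (conv5 h3 P Q R W U n)"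
    unfolding conv5_def scale_sum_right sum.distrib[symmetric] by (rule sum.cong) auto
  finally show ?thesis .
qed

end

lemma comb_lemma:
  fixes sm :: "'k::field \<Rightarrow> 'v::ab_group_add \<Rightarrow> 'v"
  assumes "vector_space sm"
  shows "sm a (x1 + y1) + sm b (x2 + y2) + sm c (x3 + y3)
     = (sm a x1 + sm b x2 + sm c x3) + (sm a y1 + sm b y2 + sm c y3)"
proof -
  interpret vector_space sm by (rule assms)
  show ?thesis by (simp add: scale_right_distrib algebra_simps)
qed

context S begin

lemma ext_vs: "vector_space (ext_sm sm)"
  unfolding vector_space_def ext_sm_def
  by (auto simp: fun_eq_iff scale_right_distrib scale_left_distrib)

lemma ext_sm_add: "ext_sm sm c (X + Y) = ext_sm sm c X + ext_sm sm c Y"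
  by (simp add: fun_eq_iff ext_sm_def scale_right_distrib)

lemma sh_scale: "sh (ext_sm sm c X) = ext_sm sm c (sh X)"
  by (simp add: fun_eq_iff ext_sm_def sh_def split: nat.split)

lemma conv3_scale:
  assumes "\<And>a b d. f (sm c a) b d = sm c (f a b d)" "\<And>a b d. f a (sm c b) d = sm c (f a b d)"
    "\<And>a b d. f a b (sm c d) = sm c (f a b d)"
  shows "conv3 f (ext_sm sm c A) Q R = ext_sm sm c (conv3 f A Q R)"
    "conv3 f P (ext_sm sm c A) R = ext_sm sm c (conv3 f P A R)"
    "conv3 f P Q (ext_sm sm c A) = ext_sm sm c (conv3 f P Q A)"
  by (simp_all add: conv3_def ext_sm_def fun_eq_iff scale_sum_right assms)

lemma lam_add:
  "lam_br br psi (A + B) Q R = lam_br br psi A Q R + lam_br br psi B Q R"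
  "lam_br br psi P (A + B) R = lam_br br psi P A R + lam_br br psi P B R"
  "lam_br br psi P Q (A + B) = lam_br br psi P Q A + lam_br br psi P Q B"
  by (simp_all add: lam_eq conv3_add[OF tadd_br] conv3_add[OF tadd_psi] sh_add add_ac)

lemma lam_scale:
  "lam_br br psi (ext_sm sm c A) Q R = ext_sm sm c (lam_br br psi A Q R)"
  "lam_br br psi P (ext_sm sm c A) R = ext_sm sm c (lam_br br psi P A R)"
  "lam_br br psi P Q (ext_sm sm c A) = ext_sm sm c (lam_br br psi P Q A)"
  using conv3_scale[where f=br, OF tri_props(2-4)[OF trb]] conv3_scale[where f=psi, OF tri_props(2-4)[OF trp]]
  by (simp_all add: lam_eq sh_scale ext_sm_add)

lemma ext_tri: "trilinear (ext_sm sm) (lam_br br psi)"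
  unfolding trilinear_def Vector_Spaces.linear_iff
  using ext_vs lam_add lam_scale by auto

lemma ext_graded: "graded_map (extV V0) (extV V1) 0 (lam_br br psi)"
  unfolding graded_map_def hom_ext
proof (intro allI impI)
  fix P Q R :: "nat \<Rightarrow> 'v" and i j k n :: nat
  assume h: "\<forall>n. hom V0 V1 (P n) i" "\<forall>n. hom V0 V1 (Q n) j" "\<forall>n. hom V0 V1 (R n) k"
  have d: "(0 + i + j + k) mod 2 = 0 \<or> (0 + i + j + k) mod 2 = 1" by auto
  show "hom V0 V1 (lam_br br psi P Q R n) ((0 + i + j + k) mod 2)"
  proof -
    have z: "hom V0 V1 0 ((0+i+j+k) mod 2)" by (rule hom_zero[OF d])
    have c: "\<And>m. hom V0 V1 (conv3 psi P Q R m) ((0+i+j+k) mod 2)" by (rule hom_conv3[OF gp h])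
    show ?thesis unfolding lam_coef
      by (rule hom_add, rule hom_conv3[OF gb h]) (use z c in \<open>simp split: nat.split\<close>)
  qed
qed

end

context S begin

lemma back_ids:
  assumes JLp: "JLSTS sm V0 V1 \<delta> psi" and coc: "cocycle3 sm V0 V1 \<delta> br psi 0"
    and hp: "\<And>n. hom V0 V1 (P n) i" and hq: "\<And>n. hom V0 V1 (Q n) j" and hr: "\<And>n. hom V0 V1 (R n) k"
    and hw: "\<And>n. hom V0 V1 (W n) l" and hu: "\<And>n. hom V0 V1 (U n) m"
  shows "lam_br br psi Q P R = ext_sm sm (- \<delta> * sgn1 (i * j)) (lam_br br psi P Q R)"
    "ext_sm sm (sgn1 (i * k)) (lam_br br psi P Q R) + ext_sm sm (sgn1 (j * i)) (lam_br br psi Q R P)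
       + ext_sm sm (sgn1 (k * j)) (lam_br br psi R P Q) = 0"
    "lam_br br psi P Q (lam_br br psi R W U) = lam_br br psi (lam_br br psi P Q R) W U
       + ext_sm sm (sgn1 (k * (i + j))) (lam_br br psi R (lam_br br psi P Q W) U)
       + ext_sm sm (\<delta> * sgn1 ((i + j) * (k + l))) (lam_br br psi R W (lam_br br psi P Q U))"
proof -
  show "lam_br br psi Q P R = ext_sm sm (- \<delta> * sgn1 (i * j)) (lam_br br psi P Q R)"
  proof (rule ext)
    fix n
    have b: "\<And>n. conv3 br Q P R n = sm (- \<delta> * sgn1 (i * j)) (conv3 br P Q R n)"
      unfolding conv3_swap12[of br Q P R]
      by (rule conv3_comb1, rule JL_parts(1)[OF JL hp hq hr hr hr])
    have p: "\<And>n. conv3 psi Q P R n = sm (- \<delta> * sgn1 (i * j)) (conv3 psi P Q R n)"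
      unfolding conv3_swap12[of psi Q P R]
      by (rule conv3_comb1, rule JL_parts(1)[OF JLp hp hq hr hr hr])
    show "lam_br br psi Q P R n = ext_sm sm (- \<delta> * sgn1 (i * j)) (lam_br br psi P Q R) n"
      by (cases n) (simp_all add: lam_coef ext_sm_def b p scale_right_distrib)
  qed
  show "ext_sm sm (sgn1 (i * k)) (lam_br br psi P Q R) + ext_sm sm (sgn1 (j * i)) (lam_br br psi Q R P)
       + ext_sm sm (sgn1 (k * j)) (lam_br br psi R P Q) = 0"
  proof (rule ext)
    fix n
    have b: "\<And>n. sm (sgn1 (i * k)) (conv3 br P Q R n) + sm (sgn1 (j * i)) (conv3 br Q R P n)
       + sm (sgn1 (k * j)) (conv3 br R P Q n) = 0"
      unfolding conv3_rot[of br Q R P] conv3_rot[of br R P Q] conv3_rot[of "\<lambda>x y z. br y z x" Q R P]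
      by (rule conv3_comb3, rule JL_parts(2)[OF JL hp hq hr hr hr])
    have p: "\<And>n. sm (sgn1 (i * k)) (conv3 psi P Q R n) + sm (sgn1 (j * i)) (conv3 psi Q R P n)
       + sm (sgn1 (k * j)) (conv3 psi R P Q n) = 0"
      unfolding conv3_rot[of psi Q R P] conv3_rot[of psi R P Q] conv3_rot[of "\<lambda>x y z. psi y z x" Q R P]
      by (rule conv3_comb3, rule JL_parts(2)[OF JLp hp hq hr hr hr])
    show "(ext_sm sm (sgn1 (i * k)) (lam_br br psi P Q R) + ext_sm sm (sgn1 (j * i)) (lam_br br psi Q R P)
       + ext_sm sm (sgn1 (k * j)) (lam_br br psi R P Q)) n = 0 n"
      by (cases n) (simp_all add: lam_coef ext_sm_def b p comb_lemma[OF vector_space_axioms])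
  qed
  have X0: "\<And>n. conv5 (\<lambda>a b c d e. br a b (br c d e)) P Q R W U n =
     conv5 (\<lambda>a b c d e. br (br a b c) d e) P Q R W U n
     + sm (sgn1 (k * (i + j))) (conv5 (\<lambda>a b c d e. br c (br a b d) e) P Q R W U n)
     + sm (\<delta> * sgn1 ((i + j) * (k + l))) (conv5 (\<lambda>a b c d e. br c d (br a b e)) P Q R W U n)"
    by (rule conv5_comb, rule JL_parts(3)[OF JL hp hq hr hw hu])
  have X2: "\<And>n. conv5 (\<lambda>a b c d e. psi a b (psi c d e)) P Q R W U n =
     conv5 (\<lambda>a b c d e. psi (psi a b c) d e) P Q R W U n
     + sm (sgn1 (k * (i + j))) (conv5 (\<lambda>a b c d e. psi c (psi a b d) e) P Q R W U n)
     + sm (\<delta> * sgn1 ((i + j) * (k + l))) (conv5 (\<lambda>a b c d e. psi c d (psi a b e)) P Q R W U n)"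
    by (rule conv5_comb, rule JL_parts(3)[OF JLp hp hq hr hw hu])
  have pt1: "\<And>a b c d e. br (P a) (Q b) (psi (R c) (W d) (U e)) + psi (P a) (Q b) (br (R c) (W d) (U e))
     = (br (psi (P a) (Q b) (R c)) (W d) (U e) + psi (br (P a) (Q b) (R c)) (W d) (U e))
     + sm (sgn1 (k * (i + j))) (br (R c) (psi (P a) (Q b) (W d)) (U e) + psi (R c) (br (P a) (Q b) (W d)) (U e))
     + sm (\<delta> * sgn1 ((i + j) * (k + l))) (br (R c) (W d) (psi (P a) (Q b) (U e)) + psi (R c) (W d) (br (P a) (Q b) (U e)))"
  proof -
    fix a b c d e
    have "d3 sm \<delta> br psi 0 (P a) i (Q b) j (R c) k (W d) l (U e) m = 0"
      using coc[unfolded cocycle3_def, rule_format, OF hp hq hr hw hu] .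
    then show "?thesis a b c d e"
      unfolding d3_rel[OF hp hq hr hw hu] right_minus_eq by (simp add: mult.commute)
  qed
  have X1: "\<And>n. conv5 (\<lambda>a b c d e. br a b (psi c d e) + psi a b (br c d e)) P Q R W U n =
     conv5 (\<lambda>a b c d e. br (psi a b c) d e + psi (br a b c) d e) P Q R W U n
     + sm (sgn1 (k * (i + j))) (conv5 (\<lambda>a b c d e. br c (psi a b d) e + psi c (br a b d) e) P Q R W U n)
     + sm (\<delta> * sgn1 ((i + j) * (k + l))) (conv5 (\<lambda>a b c d e. br c d (psi a b e) + psi c d (br a b e)) P Q R W U n)"
    by (rule conv5_comb, rule pt1)
  show "lam_br br psi P Q (lam_br br psi R W U) = lam_br br psi (lam_br br psi P Q R) W U
       + ext_sm sm (sgn1 (k * (i + j))) (lam_br br psi R (lam_br br psi P Q W) U)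
       + ext_sm sm (\<delta> * sgn1 ((i + j) * (k + l))) (lam_br br psi R W (lam_br br psi P Q U))"
    unfolding expandA[OF tadd_br tadd_psi, where P=P and Q=Q and R=R and S=W and U=U] expandB[OF tadd_br tadd_psi, where P=P and Q=Q and R=R and S=W and U=U]
      expandC[OF tadd_br tadd_psi, where P=P and Q=Q and R=R and S=W and U=U] expandE[OF tadd_br tadd_psi, where P=P and Q=Q and R=R and S=W and U=U]
    apply (rule ext)
    subgoal for n
    proof (cases n)
      case 0 then show ?thesis by (simp add: ext_sm_def X0)
    next
      case (Suc m)
      then show ?thesis
        by (cases m) (simp_all add: ext_sm_def X0 X1 X2 scale_right_distrib add_ac)
    qed
    done
qed

end

context S begin

lemma fwd_pt:
  assumes EJ: "JLSTS (ext_sm sm) (extV V0) (extV V1) \<delta> (lam_br br psi)"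
    and ha: "hom V0 V1 a i" and hb: "hom V0 V1 b j" and hc: "hom V0 V1 c k"
    and hd: "hom V0 V1 d l" and he: "hom V0 V1 e m"
  shows "psi b a c = sm (- \<delta> * sgn1 (i * j)) (psi a b c)"
    "sm (sgn1 (i * k)) (psi a b c) + sm (sgn1 (j * i)) (psi b c a) + sm (sgn1 (k * j)) (psi c a b) = 0"
    "psi a b (psi c d e) = psi (psi a b c) d e + sm (sgn1 (k * (i + j))) (psi c (psi a b d) e)
                            + sm (\<delta> * sgn1 ((i + j) * (k + l))) (psi c d (psi a b e))"
    "br a b (psi c d e) + psi a b (br c d e)
     = (br (psi a b c) d e + psi (br a b c) d e)
     + sm (sgn1 (k * (i + j))) (br c (psi a b d) e + psi c (br a b d) e)
     + sm (\<delta> * sgn1 ((i + j) * (k + l))) (br c d (psi a b e) + psi c d (br a b e))"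
proof -
  note E = JL_parts[OF EJ hom_es[OF ha] hom_es[OF hb] hom_es[OF hc] hom_es[OF hd] hom_es[OF he]]
  note c3b = conv3_es[where f=br, OF zeros(1-3)]
  note c3p = conv3_es[where f=psi, OF zeros(4-6)]
  show "psi b a c = sm (- \<delta> * sgn1 (i * j)) (psi a b c)"
    using fun_cong[OF E(1), of "Suc 0"] by (simp add: lam_coef ext_sm_def c3b c3p)
  show "sm (sgn1 (i * k)) (psi a b c) + sm (sgn1 (j * i)) (psi b c a) + sm (sgn1 (k * j)) (psi c a b) = 0"
    using fun_cong[OF E(2), of "Suc 0"] by (simp add: lam_coef ext_sm_def c3b c3p)
  note E3 = E(3)[unfolded expandA[OF tadd_br tadd_psi, where P="es a" and Q="es b" and R="es c" and S="es d" and U="es e"]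
      expandB[OF tadd_br tadd_psi, where P="es a" and Q="es b" and R="es c" and S="es d" and U="es e"]
      expandC[OF tadd_br tadd_psi, where P="es a" and Q="es b" and R="es c" and S="es d" and U="es e"]
      expandE[OF tadd_br tadd_psi, where P="es a" and Q="es b" and R="es c" and S="es d" and U="es e"]]
  show "psi a b (psi c d e) = psi (psi a b c) d e + sm (sgn1 (k * (i + j))) (psi c (psi a b d) e)
                            + sm (\<delta> * sgn1 ((i + j) * (k + l))) (psi c d (psi a b e))"
    using fun_cong[OF E3, of "Suc (Suc 0)"] by (simp add: ext_sm_def conv5_es)
  show "br a b (psi c d e) + psi a b (br c d e)
     = (br (psi a b c) d e + psi (br a b c) d e)
     + sm (sgn1 (k * (i + j))) (br c (psi a b d) e + psi c (br a b d) e)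
     + sm (\<delta> * sgn1 ((i + j) * (k + l))) (br c d (psi a b e) + psi c d (br a b e))"
    using fun_cong[OF E3, of "Suc 0"] by (simp add: ext_sm_def conv5_es)
qed

end

context S begin

lemma main:
  "JLSTS (ext_sm sm) (extV V0) (extV V1) \<delta> (lam_br br psi)
     \<longleftrightarrow> JLSTS sm V0 V1 \<delta> psi \<and> cocycle3 sm V0 V1 \<delta> br psi 0"
proof
  assume EJ: "JLSTS (ext_sm sm) (extV V0) (extV V1) \<delta> (lam_br br psi)"
  have J: "JLSTS sm V0 V1 \<delta> psi"
    unfolding JLSTS_def
  proof (intro conjI allI impI)
    show "\<delta> = 1 \<or> \<delta> = -1" by (rule delta)
    show "trilinear sm psi" by (rule trp)
    show "graded_map V0 V1 0 psi" by (rule gp)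
    fix a b c d e i j k l m
    assume h: "hom V0 V1 a i" "hom V0 V1 b j" "hom V0 V1 c k" "hom V0 V1 d l" "hom V0 V1 e m"
    show "psi b a c = sm (- \<delta> * sgn1 (i * j)) (psi a b c)" by (rule fwd_pt(1)[OF EJ h])
    show "sm (sgn1 (i * k)) (psi a b c) + sm (sgn1 (j * i)) (psi b c a) + sm (sgn1 (k * j)) (psi c a b) = 0"
      by (rule fwd_pt(2)[OF EJ h])
    show "psi a b (psi c d e) = psi (psi a b c) d e + sm (sgn1 (k * (i + j))) (psi c (psi a b d) e)
                            + sm (\<delta> * sgn1 ((i + j) * (k + l))) (psi c d (psi a b e))"
      by (rule fwd_pt(3)[OF EJ h])
  qed
  have C: "cocycle3 sm V0 V1 \<delta> br psi 0"
    unfolding cocycle3_def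
  proof (intro allI impI)
    fix x1 n1 x2 n2 x3 n3 x4 n4 x5 n5
    assume h: "hom V0 V1 x1 n1" "hom V0 V1 x2 n2" "hom V0 V1 x3 n3" "hom V0 V1 x4 n4" "hom V0 V1 x5 n5"
    show "d3 sm \<delta> br psi 0 x1 n1 x2 n2 x3 n3 x4 n4 x5 n5 = 0"
      unfolding d3_rel[OF h] right_minus_eq
      using fwd_pt(4)[OF EJ h] by (simp add: mult.commute)
  qed
  show "JLSTS sm V0 V1 \<delta> psi \<and> cocycle3 sm V0 V1 \<delta> br psi 0" using J C by blast
next
  assume "JLSTS sm V0 V1 \<delta> psi \<and> cocycle3 sm V0 V1 \<delta> br psi 0"
  then have J: "JLSTS sm V0 V1 \<delta> psi" and C: "cocycle3 sm V0 V1 \<delta> br psi 0" by auto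
  show "JLSTS (ext_sm sm) (extV V0) (extV V1) \<delta> (lam_br br psi)"
    unfolding JLSTS_def
  proof (intro conjI allI impI)
    show "\<delta> = 1 \<or> \<delta> = -1" by (rule delta)
    show "trilinear (ext_sm sm) (lam_br br psi)" by (rule ext_tri)
    show "graded_map (extV V0) (extV V1) 0 (lam_br br psi)" by (rule ext_graded)
    fix a b c d e i j k l m
    assume h: "hom (extV V0) (extV V1) a i" "hom (extV V0) (extV V1) b j" "hom (extV V0) (extV V1) c k"
      "hom (extV V0) (extV V1) d l" "hom (extV V0) (extV V1) e m"
    have h': "\<And>n. hom V0 V1 (a n) i" "\<And>n. hom V0 V1 (b n) j" "\<And>n. hom V0 V1 (c n) k"
      "\<And>n. hom V0 V1 (d n) l" "\<And>n. hom V0 V1 (e n) m" using h unfolding hom_ext by blast+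
    note B = back_ids[OF J C h']
    show "lam_br br psi b a c = ext_sm sm (- \<delta> * sgn1 (i * j)) (lam_br br psi a b c)" by (rule B(1))
    show "ext_sm sm (sgn1 (i * k)) (lam_br br psi a b c) + ext_sm sm (sgn1 (j * i)) (lam_br br psi b c a)
       + ext_sm sm (sgn1 (k * j)) (lam_br br psi c a b) = 0" by (rule B(2))
    show "lam_br br psi a b (lam_br br psi c d e) = lam_br br psi (lam_br br psi a b c) d e
       + ext_sm sm (sgn1 (k * (i + j))) (lam_br br psi c (lam_br br psi a b d) e)
       + ext_sm sm (\<delta> * sgn1 ((i + j) * (k + l))) (lam_br br psi c d (lam_br br psi a b e))"
      by (rule B(3))
  qed
qed

end

theorem theorem5p1:
  fixes sm :: "'k::field \<Rightarrow> 'v::ab_group_add \<Rightarrow> 'v"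
    and V0 V1 :: "'v set" and \<delta> :: 'k
    and br psi :: "'v \<Rightarrow> 'v \<Rightarrow> 'v \<Rightarrow> 'v"
  assumes "graded_vs sm V0 V1"
    and "JLSTS sm V0 V1 \<delta> br"
    and "trilinear sm psi" and "graded_map V0 V1 0 psi"
  shows "JLSTS (ext_sm sm) (extV V0) (extV V1) \<delta> (lam_br br psi)
         \<longleftrightarrow> JLSTS sm V0 V1 \<delta> psi \<and> cocycle3 sm V0 V1 \<delta> br psi 0"
proof -
  have vs: "vector_space sm" using assms(1)[unfolded graded_vs_def] by (elim conjE)
  interpret S sm V0 V1 \<delta> br psi
    by (intro S.intro S_axioms.intro vs assms)
  show ?thesis by (rule main)
qed

end
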